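(* Let $f:\mathbb{R}^2\to\mathbb{R}^2$ be $C^1$ with equilibrium $x_\ast$ such that $f'(x_\ast)=\begin{pmatrix}\lambda&-\omega\\ \omega&\lambda\end{pmatrix}$ with $\lambda>0$, $\omega>0$. Let $K=\begin{pmatrix}\alpha&-\beta\\ \beta&\alpha\end{pmatrix}$ with $\alpha,\beta\in\mathbb{R}$. Then for every positive integer $n$, the characteristic equation $\det(z I-f'(x_\ast)-K[1-e^{-zT}])=0$ with $T=2\pi n/\omega$ has a root with positive real part; in particular $x_\ast$ is unstable as a solution of $\dot x(t)=f(x(t))+K\big[x(t)-x(t-\tfrac{2\pi n}{\omega})\big]$. *)

theory Defs
  imports "HOL-Analysis.Analysis"
begin

definition rotmat :: "real \<Rightarrow> real \<Rightarrow> real^2^2" where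
  "rotmat a b = vector [vector [a, -b], vector [b, a]]"

definition cmat :: "real^'n^'m \<Rightarrow> complex^'n^'m" where
  "cmat M = (\<chi> i j. complex_of_real (M $ i $ j))"

definition char_fun :: "real^2^2 \<Rightarrow> real^2^2 \<Rightarrow> real \<Rightarrow> complex \<Rightarrow> complex" where
  "char_fun A K T z = det (mat z - cmat A - mat (1 - exp (- z * complex_of_real T)) ** cmat K)"

end

theory Submission
  imports Defs "HOL-Real_Asymp.Real_Asymp"
begin


lemma kder: "((\<lambda>t. t - r * sin t) has_real_derivative (1 - r * cos t)) (at t)"
  by (auto intro!: derivative_eq_intros)

lemma kder2: "((\<lambda>t. 1 - r * cos t) has_real_derivative (r * sin t)) (at t)"
  by (auto intro!: derivative_eq_intros)

lemma sin_lt_x: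
  fixes x :: real assumes "0 < x" shows "sin x < x"
proof (cases "x < 2")
  case True
  have der: "\<And>t. 0 \<le> t \<Longrightarrow> t \<le> x \<Longrightarrow> ((\<lambda>t. t - sin t) has_real_derivative (1 - cos t)) (at t)"
    by (auto intro!: derivative_eq_intros)
  obtain z where z: "0 < z" "z < x" "(x - sin x) - (0 - sin 0) = (x - 0) * (1 - cos z)"
    using MVT2[of 0 x "\<lambda>t. t - sin t" "\<lambda>t. 1 - cos t", OF assms der] by blast
  have "z \<le> pi" using z True pi_gt3 by linarith
  then have "cos z < cos 0" using cos_monotone_0_pi[of 0 z] z by simp
  then have "0 < x * (1 - cos z)" using assms by simp
  then show ?thesis using z by simp
next
  case False
  then show ?thesis using sin_le_one[of x] by linarith
qed

lemma sin_lip: "\<bar>sin a - sin b\<bar> \<le> \<bar>a - b::real\<bar>"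
proof -
  have "\<bar>sin a - sin b\<bar> = 2 * \<bar>sin ((a - b)/2)\<bar> * \<bar>cos ((a+b)/2)\<bar>"
    by (simp add: sin_diff_sin abs_mult)
  also have "\<dots> \<le> 2 * \<bar>(a-b)/2\<bar> * 1"
    by (rule mult_mono) (use abs_sin_x_le_abs_x[of "(a-b)/2"] abs_cos_le_one in auto)
  finally show ?thesis by simp
qed

lemma first_root:
  fixes g :: "real \<Rightarrow> real"
  assumes cont: "continuous_on UNIV g" and ab: "a < b" and ga: "g a < 0" and gb: "0 \<le> g b"
  shows "\<exists>t. a < t \<and> t \<le> b \<and> g t = 0 \<and> (\<forall>s. a \<le> s \<and> s < t \<longrightarrow> g s < 0)"
proof -
  let ?S = "{a..b} \<inter> {s. 0 \<le> g s}"
  have "closed {s. 0 \<le> g s}" using closed_Collect_le[OF continuous_on_const cont] by simp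
  then have "compact ?S" by (intro compact_Int_closed) auto
  moreover have "b \<in> ?S" using ab gb by auto
  then have "?S \<noteq> {}" by blast
  ultimately obtain t where t: "t \<in> ?S" and min: "\<forall>s\<in>?S. t \<le> s"
    using compact_attains_inf by blast
  have "t \<noteq> a" using t ga by auto
  hence at: "a < t" using t by auto
  have neg: "g s < 0" if "a \<le> s" "s < t" for s
  proof (rule ccontr)
    assume "\<not> g s < 0"
    then have "s \<in> ?S" using that t by auto
    then have "t \<le> s" using min by blast
    then show False using that by simp
  qed
  have "g t = 0"
  proof (rule ccontr)
    assume "g t \<noteq> 0" then have gt: "0 < g t" using t by auto
    have "continuous_on {a..t} g" using cont by (rule continuous_on_subset) auto
    then obtain s where "a \<le> s" "s \<le> t" "g s = 0" using IVT'[of g a 0 t] ga gt at by auto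
    then show False using neg[of s] gt by (cases "s = t") auto
  qed
  then show ?thesis using at t neg by auto
qed

lemma last_root:
  fixes g :: "real \<Rightarrow> real"
  assumes cont: "continuous_on UNIV g" and ab: "a < b" and ga: "0 \<le> g a" and gb: "g b < 0"
  shows "\<exists>t. a \<le> t \<and> t < b \<and> g t = 0 \<and> (\<forall>s. t < s \<and> s \<le> b \<longrightarrow> g s < 0)"
proof -
  have c2: "continuous_on UNIV (\<lambda>s. g (- s))"
    by (rule continuous_on_compose2[OF cont]) (auto intro: continuous_intros)
  obtain t where t: "- b < t" "t \<le> - a" "g (- t) = 0" "\<forall>s. - b \<le> s \<and> s < t \<longrightarrow> g (- s) < 0"
    using first_root[OF c2, of "-b" "-a"] ab ga gb by auto
  show ?thesis
  proof (intro exI[of _ "-t"] conjI allI impI)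
    fix s assume "- t < s \<and> s \<le> b"
    then show "g s < 0" using t(4)[rule_format, of "-s"] by auto
  qed (use t in auto)
qed

definition Rf :: "real \<Rightarrow> real \<Rightarrow> real \<Rightarrow> real" where
  "Rf r eta t = ln (r * sin t / (t - eta)) + (t - eta) * cos t / sin t"

lemma Rf_end:
  assumes "t - eta = r * sin t" "sin t \<noteq> 0" "0 < r"
  shows "Rf r eta t = r * cos t"
proof -
  have "t - eta \<noteq> 0" using assms by simp
  then have "r * sin t / (t - eta) = 1" using assms by simp
  then show ?thesis using assms unfolding Rf_def by simp
qed

lemma Rf_cont:
  assumes "\<forall>t\<in>{p..s}. sin t \<noteq> 0 \<and> t \<noteq> eta \<and> 0 < r * sin t / (t - eta)"
  shows "continuous_on {p..s} (Rf r eta)"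
  unfolding Rf_def using assms by (intro continuous_intros) auto

lemma curve_sol:
  fixes r eta th v :: real
  assumes W: "1 < r * sin th / (th - eta)"
    and R: "Rf r eta th = v"
  shows "\<exists>x>0. \<exists>t. t - r * exp (-x) * sin t = eta \<and> x + r * exp (-x) * cos t = v"
proof -
  define W where "W = r * sin th / (th - eta)"
  have s: "sin th \<noteq> 0" and d: "th - eta \<noteq> 0" using W by auto
  have Wpos: "0 < W" using W W_def by simp
  have rne: "r \<noteq> 0" using W by auto
  have e: "r * exp (- ln W) = (th - eta) / sin th"
    using Wpos s d rne by (simp add: exp_minus W_def field_simps)
  have e1: "r * exp (- ln W) * sin th = th - eta" using e s by simp
  have e2: "r * exp (- ln W) * cos th = (th - eta) * cos th / sin th" using e s by simp
  show ?thesis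
  proof (intro exI conjI)
    show "0 < ln W" using W W_def by simp
    show "th - r * exp (- ln W) * sin th = eta" using e1 by simp
    show "ln W + r * exp (- ln W) * cos th = v" using e2 R W_def unfolding Rf_def by simp
  qed
qed



lemma rightside:
  fixes r eta p s v :: real
  assumes r: "0 < r" and ep: "eta < p" and ps: "p < s"
    and inside: "\<And>t. p < t \<Longrightarrow> t < s \<Longrightarrow> t - r * sin t < eta"
    and kp: "p - r * sin p \<le> eta" and kp_or: "p - r * sin p < eta \<or> v < Rf r eta p"
    and ks: "s - r * sin s = eta"
    and vs: "r * cos s < v" and vp: "v \<le> Rf r eta p"
  shows "\<exists>x>0. \<exists>t. t - r * exp (-x) * sin t = eta \<and> x + r * exp (-x) * cos t = v"
proof -
  have kle: "t - r * sin t \<le> eta" if "p \<le> t" "t \<le> s" for t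
    using inside[of t] kp ks that by (cases "t = p"; cases "t = s") auto
  have sinpos: "0 < sin t" if "p \<le> t" "t \<le> s" for t
  proof -
    have "0 < t - eta" using that ep by simp
    also have "\<dots> \<le> r * sin t" using kle[OF that] by simp
    finally show ?thesis using r by (simp add: zero_less_mult_iff)
  qed
  have Wpos: "0 < r * sin t / (t - eta)" if "p \<le> t" "t \<le> s" for t
    using sinpos[OF that] r that ep by (intro divide_pos_pos) auto
  have sne: "sin t \<noteq> 0" if "p \<le> t" "t \<le> s" for t using sinpos[OF that] by simp
  have cont: "continuous_on {p..s} (Rf r eta)"
    by (rule Rf_cont) (use sne Wpos ep in \<open>fastforce\<close>)
  have Rs: "Rf r eta s = r * cos s" using Rf_end[of s eta r] ks sinpos[of s] ps r by simp
  obtain th where th: "p \<le> th" "th \<le> s" "Rf r eta th = v"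
    using IVT2'[of "Rf r eta" s v p] Rs vs vp cont ps by force
  have "th \<noteq> s" using th Rs vs by auto
  then have ths: "th < s" using th by simp
  have kth: "th - r * sin th < eta"
  proof (cases "th = p")
    case True then show ?thesis using kp_or th by auto
  next
    case False then show ?thesis using inside[of th] th ths by auto
  qed
  have pos: "0 < th - eta" using th ep by simp
  have W: "1 < r * sin th / (th - eta)" using kth pos by (simp add: less_divide_eq)
  show ?thesis by (rule curve_sol[OF W th(3)])
qed

lemma leftside:
  fixes r eta p s v :: real
  assumes r: "0 < r" and ps: "p < s" and se: "s < eta"
    and inside: "\<And>t. p < t \<Longrightarrow> t < s \<Longrightarrow> eta < t - r * sin t"
    and kp: "p - r * sin p = eta" and ks: "s - r * sin s = eta"
    and vp: "r * cos p < v" and vs: "v < r * cos s"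
  shows "\<exists>x>0. \<exists>t. t - r * exp (-x) * sin t = eta \<and> x + r * exp (-x) * cos t = v"
proof -
  have kge: "eta \<le> t - r * sin t" if "p \<le> t" "t \<le> s" for t
    using inside[of t] kp ks that by (cases "t = p"; cases "t = s") auto
  have sinneg: "sin t < 0" if "p \<le> t" "t \<le> s" for t
  proof -
    have "r * sin t \<le> t - eta" using kge[OF that] by simp
    also have "\<dots> < 0" using that se by simp
    finally show ?thesis using r by (simp add: mult_less_0_iff)
  qed
  have Wpos: "0 < r * sin t / (t - eta)" if "p \<le> t" "t \<le> s" for t
  proof -
    have "r * sin t < 0" using sinneg[OF that] r by (simp add: mult_pos_neg)
    moreover have "t - eta < 0" using that se by simp
    ultimately show ?thesis by (simp add: divide_neg_neg)
  qed
  have cont: "continuous_on {p..s} (Rf r eta)"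
    by (rule Rf_cont) (use sinneg Wpos se in \<open>fastforce\<close>)
  have Rs: "Rf r eta s = r * cos s" using Rf_end[of s eta r] ks sinneg[of s] ps r by simp
  have Rp: "Rf r eta p = r * cos p" using Rf_end[of p eta r] kp sinneg[of p] ps r by simp
  obtain th where th: "p \<le> th" "th \<le> s" "Rf r eta th = v"
    using IVT'[of "Rf r eta" p v s] Rs Rp vs vp cont ps by force
  have "th \<noteq> s" "th \<noteq> p" using th Rs Rp vs vp by auto
  then have kth: "eta < th - r * sin th" using inside[of th] th by auto
  have neg: "th - eta < 0" using th se by simp
  have W: "1 < r * sin th / (th - eta)" using kth neg by (simp add: less_divide_eq)
  show ?thesis by (rule curve_sol[OF W th(3)])
qed

lemma second_order:
  fixes r t :: real
  assumes c: "1 \<le> r * cos t" and s: "0 < sin t" and r: "0 < r"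
  shows "\<exists>d>0. \<forall>h. 0 < h \<and> h < d \<longrightarrow> t - r * sin t < (t - h) - r * sin (t - h)"
proof (cases "1 < r * cos t")
  case True
  then have "1 - r * cos t < 0" by simp
  from DERIV_neg_dec_left[OF kder[of r t] this] obtain d where
    "d>0" "\<forall>h>0. h < d \<longrightarrow> t - r * sin t < (t - h) - r * sin (t - h)" by auto
  then show ?thesis by auto
next
  case False
  then have eq: "r * cos t = 1" using c by simp
  have "0 < r * sin t" using r s by simp
  from DERIV_pos_inc_left[OF kder2[of r t] this] obtain d where
    d: "d>0" "\<forall>h>0. h < d \<longrightarrow> 1 - r * cos (t - h) < 1 - r * cos t" by auto
  show ?thesis
  proof (intro exI[of _ d] conjI allI impI)
    show "0 < d" by (rule d(1))
    fix h assume h: "0 < h \<and> h < d"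
    have der: "\<And>x. t - h \<le> x \<Longrightarrow> x \<le> t \<Longrightarrow> ((\<lambda>t. t - r * sin t) has_real_derivative (1 - r * cos x)) (at x)"
      using kder by blast
    obtain z where z: "t - h < z" "z < t"
      "(t - r * sin t) - ((t - h) - r * sin (t - h)) = (t - (t - h)) * (1 - r * cos z)"
      using MVT2[of "t - h" t "\<lambda>t. t - r * sin t" "\<lambda>t. 1 - r * cos t", OF _ der] h by auto
    have "1 - r * cos (t - (t - z)) < 1 - r * cos t"
      using d(2)[rule_format, of "t - z"] z h by auto
    then have "1 - r * cos z < 0" using eq by simp
    then have "h * (1 - r * cos z) < 0" using h by (simp add: mult_pos_neg)
    then show "t - r * sin t < (t - h) - r * sin (t - h)" using z(3) by simp
  qed
qed

lemma te_cos:
  fixes r eta te :: real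
  assumes r: "0 < r" and et: "eta < te"
    and inside: "\<forall>s. eta < s \<and> s < te \<longrightarrow> s - r * sin s < eta"
    and kte: "te - r * sin te = eta"
  shows "r * cos te < 1"
proof (rule ccontr)
  assume "\<not> r * cos te < 1"
  then have c: "1 \<le> r * cos te" by simp
  have "0 < r * sin te" using kte et by simp
  then have s: "0 < sin te" using r by (simp add: zero_less_mult_iff)
  obtain d where d: "d > 0" "\<forall>h. 0 < h \<and> h < d \<longrightarrow> te - r * sin te < (te - h) - r * sin (te - h)"
    using second_order[OF c s r] by blast
  define h where "h = min d (te - eta) / 2"
  have h: "0 < h" "h < d" "h < te - eta" using d et by (auto simp: h_def)
  have "eta < (te - h) - r * sin (te - h)" using d(2) h kte by auto
  moreover have "(te - h) - r * sin (te - h) < eta" using inside h by auto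
  ultimately show False by simp
qed



lemma kcont: "continuous_on UNIV (\<lambda>s::real. s - r * sin s - eta)"
  by (intro continuous_intros)

lemma kcont': "continuous_on UNIV (\<lambda>s::real. eta - (s - r * sin s))"
  by (intro continuous_intros)

lemma optB_right:
  fixes r eta te th0 v :: real
  assumes r: "0 < r" and et: "eta < te" and tt: "te < th0"
    and kte: "te - r * sin te = eta" and k0: "th0 - r * sin th0 = eta"
    and v0: "r * cos th0 < v" and v1: "v < 1"
  shows "\<exists>x>0. \<exists>t. t - r * exp (-x) * sin t = eta \<and> x + r * exp (-x) * cos t = v"
proof -
  have "0 < 1 - r * cos th0" using v0 v1 by simp
  from DERIV_pos_inc_left[OF kder this] obtain d where
    d: "d>0" "\<forall>h>0. h<d \<longrightarrow> (th0 - h) - r * sin (th0 - h) < th0 - r * sin th0" by auto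
  define M where "M = min d (th0 - te)"
  define m where "m = th0 - M / 2"
  have mm: "M \<le> d" "M \<le> th0 - te" "0 < M"
    using d tt unfolding M_def by auto
  have m1: "te < m" using mm unfolding m_def by linarith
  have m2: "m < th0" using mm unfolding m_def by linarith
  have m3: "th0 - m < d" using mm unfolding m_def by linarith
  note m = m1 m2 m3
  have km: "m - r * sin m - eta < 0"
    using d(2)[rule_format, of "th0 - m"] m k0 by simp
  obtain p where p: "te \<le> p" "p < m" "p - r * sin p - eta = 0"
      "\<forall>s. p < s \<and> s \<le> m \<longrightarrow> s - r * sin s - eta < 0"
    using last_root[OF kcont, of te m r eta] m kte km by auto
  have inside: "t - r * sin t < eta" if "p < t" "t < th0" for t
  proof (cases "t \<le> m")
    case True then show ?thesis using p(4) that by auto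
  next
    case False
    then show ?thesis using d(2)[rule_format, of "th0 - t"] that m k0 by simp
  qed
  have cp: "1 \<le> r * cos p"
  proof (rule ccontr)
    assume "\<not> 1 \<le> r * cos p" then have "0 < 1 - r * cos p" by simp
    from DERIV_pos_inc_right[OF kder this] obtain e where
      e: "e>0" "\<forall>h>0. h<e \<longrightarrow> p - r * sin p < (p + h) - r * sin (p + h)" by auto
    define H where "H = min e (m - p)"
    have HH: "H \<le> e" "H \<le> m - p" "0 < H" using e p unfolding H_def by auto
    define h where "h = H / 2"
    have h: "0 < h" "h < e" "p + h \<le> m" using HH unfolding h_def by linarith+
    have "(p + h) - r * sin (p + h) < eta" using p(4) h by auto
    moreover have "eta < (p + h) - r * sin (p + h)" using e h p(3) by auto
    ultimately show False by simp
  qed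
  have pe: "eta < p" using p et by simp
  have sp: "sin p \<noteq> 0" using p(3) pe by auto
  have Rp: "Rf r eta p = r * cos p" using Rf_end[of p eta r] p(3) sp r by simp
  show ?thesis
    by (rule rightside[of r eta p th0 v]) (use r pe p m inside k0 v0 v1 cp Rp in auto)
qed

lemma optB_left:
  fixes r eta th0 v :: real
  assumes r: "0 < r" and te: "th0 < eta" and keta: "eta - r * sin eta < eta"
    and k0: "th0 - r * sin th0 = eta"
    and v0: "r * cos th0 < v" and v1: "v < 1"
  shows "\<exists>x>0. \<exists>t. t - r * exp (-x) * sin t = eta \<and> x + r * exp (-x) * cos t = v"
proof -
  have "0 < 1 - r * cos th0" using v0 v1 by simp
  from DERIV_pos_inc_right[OF kder this] obtain d where
    d: "d>0" "\<forall>h>0. h<d \<longrightarrow> th0 - r * sin th0 < (th0 + h) - r * sin (th0 + h)" by auto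
  define M where "M = min d (eta - th0)"
  define m where "m = th0 + M / 2"
  have mm: "M \<le> d" "M \<le> eta - th0" "0 < M"
    using d te unfolding M_def by auto
  have m1: "th0 < m" using mm unfolding m_def by linarith
  have m2: "m < eta" using mm unfolding m_def by linarith
  have m3: "m - th0 < d" using mm unfolding m_def by linarith
  note m = m1 m2 m3
  have km: "eta - (m - r * sin m) < 0"
    using d(2)[rule_format, of "m - th0"] m k0 by simp
  obtain s where s: "m < s" "s \<le> eta" "eta - (s - r * sin s) = 0"
      "\<forall>t. m \<le> t \<and> t < s \<longrightarrow> eta - (t - r * sin t) < 0"
    using first_root[OF kcont', of m eta eta r] m keta km by auto
  have "s \<noteq> eta"
  proof
    assume "s = eta"
    then have "eta - r * sin eta = eta" using s(3) by simp
    then show False using keta by linarith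
  qed
  then have se: "s < eta" using s(2) by linarith
  have inside: "eta < t - r * sin t" if "th0 < t" "t < s" for t
  proof (cases "m \<le> t")
    case True then show ?thesis using s(4) that by auto
  next
    case False
    then show ?thesis using d(2)[rule_format, of "t - th0"] that m k0 by simp
  qed
  have cs: "1 \<le> r * cos s"
  proof (rule ccontr)
    assume "\<not> 1 \<le> r * cos s" then have "0 < 1 - r * cos s" by simp
    from DERIV_pos_inc_left[OF kder this] obtain e where
      e: "e>0" "\<forall>h>0. h<e \<longrightarrow> (s - h) - r * sin (s - h) < s - r * sin s" by auto
    define H where "H = min e (s - m)"
    have HH: "H \<le> e" "H \<le> s - m" "0 < H" using e s unfolding H_def by auto
    define h where "h = H / 2"
    have h: "0 < h" "h < e" "m \<le> s - h" using HH unfolding h_def by linarith+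
    have "eta < (s - h) - r * sin (s - h)" using s(4) h by auto
    moreover have "(s - h) - r * sin (s - h) < eta" using e h s(3) by auto
    ultimately show False by simp
  qed
  show ?thesis
  proof (rule leftside[OF r _ se inside k0 _ v0])
    show "th0 < s" using m s by simp
    show "s - r * sin s = eta" using s(3) by simp
    show "v < r * cos s" using v1 cs by simp
  qed
qed

lemma start_pos:
  fixes r eta te v :: real
  assumes r: "0 < r" and se: "0 < sin eta" and et: "eta < te"
    and inside: "\<forall>s. eta < s \<and> s < te \<longrightarrow> s - r * sin s < eta"
  shows "\<exists>th1. eta < th1 \<and> th1 < te \<and> v \<le> Rf r eta th1"
proof -
  define E where "E = exp (v + r)"
  have E: "0 < E" by (simp add: E_def)
  define y1 where "y1 = min ((te - eta)/2) (r * sin eta / (2*E))"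
  define y where "y = min (sin eta / 2) y1"
  have "0 < r * sin eta / (2*E)" using r se E by simp
  then have "0 < y1" using et unfolding y1_def by auto
  have y1a: "y1 \<le> (te - eta)/2" and y1b: "y1 \<le> r * sin eta / (2*E)"
    unfolding y1_def by (rule min.cobounded1, rule min.cobounded2)
  have y0: "0 < y" using se \<open>0 < y1\<close> unfolding y_def by auto
  have ya: "y \<le> sin eta / 2" and yb: "y \<le> y1"
    unfolding y_def by (rule min.cobounded1, rule min.cobounded2)
  have "(te - eta)/2 < te - eta" using et by (simp add: field_simps)
  then have yc: "y < te - eta" using yb y1a by linarith
  have yd: "y \<le> r * sin eta / (2*E)" using yb y1b by linarith
  note y = y0 ya yc yd
  define t where "t = eta + y"
  have "\<bar>sin t - sin eta\<bar> \<le> y" using sin_lip[of t eta] y by (simp add: t_def)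
  then have st: "sin eta / 2 \<le> sin t" using y by linarith
  have kt: "t - r * sin t < eta" using inside y by (simp add: t_def)
  have yt: "y < r * sin t" using kt by (simp add: t_def)
  have "E \<le> r * (sin eta / 2) / y"
    using y(1,4) E by (simp add: field_simps)
  also have "\<dots> \<le> r * sin t / y"
    using st r y(1) by (intro divide_right_mono mult_left_mono) auto
  finally have EW: "E \<le> r * sin t / (t - eta)" by (simp add: t_def)
  have "v + r \<le> ln (r * sin t / (t - eta))"
    using EW E by (metis E_def ln_exp ln_le_cancel_iff order_less_le_trans)
  moreover have "- r \<le> (t - eta) * cos t / sin t"
  proof -
    have sp: "0 < sin t" using st se by linarith
    have "(t - eta) * (-1) \<le> (t - eta) * cos t"
      using y(1) by (intro mult_left_mono) (auto simp: t_def)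
    then have "- (t - eta) \<le> (t - eta) * cos t" by simp
    then have "- (t - eta) / sin t \<le> (t - eta) * cos t / sin t"
      using sp by (simp add: divide_right_mono)
    moreover have "(t - eta) / sin t \<le> r" using yt sp by (simp add: t_def divide_le_eq)
    ultimately show ?thesis by (smt (verit) minus_divide_left)
  qed
  ultimately have "v \<le> Rf r eta t" unfolding Rf_def by linarith
  then show ?thesis using y by (intro exI[of _ t]) (auto simp: t_def)
qed

lemma start_zero:
  fixes r eta te v :: real
  assumes r: "1 < r" and se: "sin eta = 0" and ce: "cos eta = 1" and et: "eta < te"
    and v: "v < ln r + 1"
  shows "\<exists>th1. eta < th1 \<and> th1 < te \<and> v \<le> Rf r eta th1"
proof -
  have lim: "((\<lambda>y::real. ln (sin y / y) + y * cos y / sin y) \<longlongrightarrow> 1) (at_right 0)"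
    by real_asymp
  have ev1: "eventually (\<lambda>y. v - ln r < ln (sin y / y) + y * cos y / sin y) (at_right 0)"
    using lim v by (intro order_tendstoD(1)) auto
  have ev2: "eventually (\<lambda>y::real. 0 < y \<and> y < te - eta \<and> 0 < sin y) (at_right 0)"
    unfolding eventually_at_right_field
    by (rule exI[of _ "min (te - eta) pi"]) (use et in \<open>auto intro: sin_gt_zero\<close>)
  obtain y where y: "v - ln r < ln (sin y / y) + y * cos y / sin y" "0 < y" "y < te - eta" "0 < sin y"
    using eventually_happens'[OF _ eventually_conj[OF ev1 ev2]] by auto
  have s1: "sin (eta + y) = sin y" and c1: "cos (eta + y) = cos y"
    using se ce by (simp_all add: sin_add cos_add)
  have "0 < sin y / y" using y by simp
  then have "ln (r * (sin y / y)) = ln r + ln (sin y / y)"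
    using r by (intro ln_mult_pos) auto
  then have "ln (r * sin y / y) = ln r + ln (sin y / y)" by simp
  then have "v \<le> Rf r eta (eta + y)" unfolding Rf_def s1 c1 using y by simp
  then show ?thesis using y by (intro exI[of _ "eta + y"]) auto
qed

lemma horiz:
  fixes r c v x0 :: real
  assumes r: "0 < r" and c: "\<bar>c\<bar> \<le> 1" and x0: "0 \<le> x0"
    and st: "x0 + r * exp (-x0) * c < v \<or> (0 < x0 \<and> x0 + r * exp (-x0) * c \<le> v)"
  shows "\<exists>x>0. x + r * exp (-x) * c = v"
proof -
  define X where "X = x0 + \<bar>v\<bar> + r"
  have "- r \<le> r * exp (-X) * c"
  proof -
    have "\<bar>r * exp (-X) * c\<bar> \<le> r * 1 * 1"
      unfolding abs_mult using r c x0
      by (intro mult_mono) (auto simp: X_def)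
    then show ?thesis by linarith
  qed
  then have fX: "v \<le> X + r * exp (-X) * c" using abs_ge_self[of v] x0 unfolding X_def by linarith
  have cont: "continuous_on {x0..X} (\<lambda>x. x + r * exp (-x) * c)" by (intro continuous_intros)
  obtain x where x: "x0 \<le> x" "x \<le> X" "x + r * exp (-x) * c = v"
    using IVT'[of "\<lambda>x. x + r * exp (-x) * c" x0 v X, OF _ fX _ cont] st r
    by (auto simp: X_def)
  have "0 < x" using x st x0 by (cases "x = x0") auto
  then show ?thesis using x by blast
qed



lemma rsin_bounds: fixes r x :: real assumes "0 < r"
  shows "r * sin x \<le> r" "- r \<le> r * sin x" "r * cos x \<le> r" "- r \<le> r * cos x"
proof -
  have "\<bar>r * sin x\<bar> \<le> r" "\<bar>r * cos x\<bar> \<le> r"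
    using assms abs_sin_le_one[of x] abs_cos_le_one[of x]
    by (auto simp: abs_mult intro: mult_left_le_one_le)
  then show "r * sin x \<le> r" "- r \<le> r * sin x" "r * cos x \<le> r" "- r \<le> r * cos x"
    by linarith+
qed

lemma core_pos:
  fixes r a eta th0 :: real
  assumes r: "0 < r" and a: "0 < a" and eta: "eta = th0 - r * sin th0" and se: "0 < sin eta"
  shows "\<exists>x>0. \<exists>t. t - r * exp (-x) * sin t = eta \<and> x + r * exp (-x) * cos t = r * cos th0 + a"
proof -
  define v where "v = r * cos th0 + a"
  have keta: "eta - r * sin eta < eta" using r se by simp
  have gb: "0 \<le> (eta + r + 1) - r * sin (eta + r + 1) - eta"
    using rsin_bounds(1)[OF r, of "eta + r + 1"] by linarith
  obtain te where te: "eta < te" "te \<le> eta + r + 1" "te - r * sin te - eta = 0"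
      "\<forall>s. eta \<le> s \<and> s < te \<longrightarrow> s - r * sin s - eta < 0"
    using first_root[OF kcont, of eta "eta + r + 1" r eta] r keta gb by auto
  have inside: "\<forall>s. eta < s \<and> s < te \<longrightarrow> s - r * sin s < eta" using te(4) by auto
  have kte: "te - r * sin te = eta" using te(3) by simp
  have c1: "r * cos te < 1" by (rule te_cos[OF r te(1) inside kte])
  show ?thesis
  proof (cases "r * cos te < v")
    case True
    obtain th1 where th1: "eta < th1" "th1 < te" "v \<le> Rf r eta th1"
      using start_pos[OF r se te(1) inside] by blast
    have "\<exists>x>0. \<exists>t. t - r * exp (-x) * sin t = eta \<and> x + r * exp (-x) * cos t = v"
    proof (rule rightside[OF r th1(1) th1(2) _ _ _ kte True th1(3)])
      show "\<And>t. th1 < t \<Longrightarrow> t < te \<Longrightarrow> t - r * sin t < eta" using inside th1 by auto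
      show "th1 - r * sin th1 \<le> eta" using inside th1 by auto
      show "th1 - r * sin th1 < eta \<or> v < Rf r eta th1" using inside th1 by auto
    qed
    then show ?thesis by (simp add: v_def)
  next
    case False
    then have v1: "v < 1" using c1 by simp
    have v0: "r * cos th0 < v" using a v_def by simp
    have k0: "th0 - r * sin th0 = eta" using eta by simp
    have "th0 \<noteq> eta"
    proof
      assume "th0 = eta"
      then have "sin th0 = 0" using eta r by simp
      then show False using se \<open>th0 = eta\<close> by simp
    qed
    then consider "eta < th0" | "th0 < eta" by linarith
    then show ?thesis
    proof cases
      case 1
      have "te \<le> th0"
      proof (rule ccontr)
        assume "\<not> te \<le> th0"
        then have "th0 - r * sin th0 < eta" using inside 1 by auto
        then show False using k0 by simp
      qed
      moreover have "te \<noteq> th0" using False v0 by auto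
      ultimately have "te < th0" by simp
      from optB_right[OF r te(1) this kte k0 v0 v1] show ?thesis by (simp add: v_def)
    next
      case 2
      from optB_left[OF r 2 keta k0 v0 v1] show ?thesis by (simp add: v_def)
    qed
  qed
qed

lemma core_zero:
  fixes r a eta th0 :: real
  assumes r: "0 < r" and a: "0 < a" and eta: "eta = th0 - r * sin th0" and se: "sin eta = 0"
    and ge: "eta \<le> th0"
  shows "\<exists>x>0. \<exists>t. t - r * exp (-x) * sin t = eta \<and> x + r * exp (-x) * cos t = r * cos th0 + a"
proof -
  define v where "v = r * cos th0 + a"
  have hz: "\<exists>x>0. \<exists>t. t - r * exp (-x) * sin t = eta \<and> x + r * exp (-x) * cos t = v"
    if x0a: "0 \<le> x0" and x0b: "x0 + r * exp (-x0) * cos eta < v \<or> (0 < x0 \<and> x0 + r * exp (-x0) * cos eta \<le> v)"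
    for x0
  proof -
    obtain x where "0 < x" "x + r * exp (-x) * cos eta = v"
      using horiz[OF r abs_cos_le_one x0a x0b] by blast
    then show ?thesis using se by (intro exI[of _ x] conjI exI[of _ eta]) auto
  qed
  have k0: "th0 - r * sin th0 = eta" using eta by simp
  have v0: "r * cos th0 < v" using a v_def by simp
  have "\<exists>x>0. \<exists>t. t - r * exp (-x) * sin t = eta \<and> x + r * exp (-x) * cos t = v"
  proof (cases "r * cos eta < v")
    case True
    then show ?thesis using hz[of 0] by simp
  next
    case False
    have "cos eta ^ 2 = 1" using sin_cos_squared_add[of eta] se by simp
    then have "cos eta = 1 \<or> cos eta = -1" by (simp add: power2_eq_1_iff)
    moreover have "cos eta \<noteq> -1"
    proof
      assume "cos eta = -1"
      then show False using False v0 rsin_bounds(4)[OF r, of th0] by simp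
    qed
    ultimately have ce: "cos eta = 1" by simp
    have "th0 \<noteq> eta" using False v0 ce by auto
    then have et0: "eta < th0" using ge by simp
    define y0 where "y0 = th0 - eta"
    have "sin th0 = sin (th0 - eta)" using se ce by (simp add: sin_diff)
    then have y0e: "y0 = r * sin y0" using k0 by (simp add: y0_def)
    have y0p: "0 < y0" using et0 y0_def by simp
    have sy1: "sin y0 < y0" by (rule sin_lt_x[OF y0p])
    have sy2: "0 < sin y0"
    proof -
      have "0 < r * sin y0" using y0e y0p by linarith
      then show ?thesis using r by (simp add: zero_less_mult_iff)
    qed
    have r1: "1 < r"
    proof (rule ccontr)
      assume "\<not> 1 < r"
      then have "r * sin y0 \<le> 1 * sin y0" using sy2 by (intro mult_right_mono) auto
      then show False using y0e sy1 by linarith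
    qed
    have lnr: "0 < ln r" using r1 by simp
    show ?thesis
    proof (cases "ln r + 1 \<le> v")
      case True
      have "ln r + r * exp (- ln r) * cos eta = ln r + 1"
        using r ce by (simp add: exp_minus)
      then show ?thesis using hz[of "ln r"] lnr True by simp
    next
      case False
      have "1 - r * cos eta < 0" using ce r1 by simp
      from DERIV_neg_dec_right[OF kder this] obtain d where
        d: "d>0" "\<forall>h>0. h<d \<longrightarrow> eta + h - r * sin (eta + h) < eta - r * sin eta" by auto
      define M where "M = min d y0"
      have MM: "M \<le> d" "M \<le> y0" "0 < M" using d y0p unfolding M_def by auto
      define m where "m = eta + M / 2"
      have m1: "eta < m" using MM unfolding m_def by linarith
      have m2: "m < th0" using MM unfolding m_def y0_def by linarith
      have m3: "m - eta < d" using MM unfolding m_def by linarith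
      have km: "m - r * sin m - eta < 0"
        using d(2)[rule_format, of "m - eta"] m1 m3 se by simp
      obtain te where te: "m < te" "te \<le> th0" "te - r * sin te - eta = 0"
          "\<forall>s. m \<le> s \<and> s < te \<longrightarrow> s - r * sin s - eta < 0"
        using first_root[OF kcont, of m th0 r eta] m2 km k0 by auto
      have inside: "\<forall>s. eta < s \<and> s < te \<longrightarrow> s - r * sin s < eta"
      proof (intro allI impI)
        fix s assume s: "eta < s \<and> s < te"
        show "s - r * sin s < eta"
        proof (cases "m \<le> s")
          case True then show ?thesis using te(4) s by auto
        next
          case False
          then show ?thesis using d(2)[rule_format, of "s - eta"] s m3 se by simp
        qed
      qed
      have et: "eta < te" using m1 te by simp
      have kte: "te - r * sin te = eta" using te(3) by simp
      have c1: "r * cos te < 1" by (rule te_cos[OF r et inside kte])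
      show ?thesis
      proof (cases "r * cos te < v")
        case True
        have vl: "v < ln r + 1" using False by simp
        obtain th1 where th1: "eta < th1" "th1 < te" "v \<le> Rf r eta th1"
          using start_zero[OF r1 se ce et vl] by blast
        show ?thesis
        proof (rule rightside[OF r th1(1) th1(2) _ _ _ kte True th1(3)])
          show "\<And>t. th1 < t \<Longrightarrow> t < te \<Longrightarrow> t - r * sin t < eta" using inside th1 by auto
          show "th1 - r * sin th1 \<le> eta" using inside th1 by auto
          show "th1 - r * sin th1 < eta \<or> v < Rf r eta th1" using inside th1 by auto
        qed
      next
        case False
        then have v1: "v < 1" using c1 by simp
        have "te \<noteq> th0" using False v0 by auto
        then have "te < th0" using te by simp
        from optB_right[OF r et this kte k0 v0 v1] show ?thesis .
      qed
    qed
  qed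
  then show ?thesis by (simp add: v_def)
qed

lemma real_main:
  fixes r a th0 :: real
  assumes r: "0 < r" and a: "0 < a"
  shows "\<exists>x>0. \<exists>t. t - r * exp (-x) * sin t = th0 - r * sin th0 \<and>
     x + r * exp (-x) * cos t = r * cos th0 + a"
proof -
  define eta where "eta = th0 - r * sin th0"
  have neg: "\<exists>x>0. \<exists>t. t - r * exp (-x) * sin t = eta \<and> x + r * exp (-x) * cos t = r * cos th0 + a"
    if "\<exists>x>0. \<exists>t. t - r * exp (-x) * sin t = -eta \<and> x + r * exp (-x) * cos t = r * cos th0 + a"
  proof -
    from that obtain x t where "0 < x" "t - r * exp (-x) * sin t = -eta"
      "x + r * exp (-x) * cos t = r * cos th0 + a" by blast
    then show ?thesis by (intro exI[of _ x] conjI exI[of _ "-t"]) auto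
  qed
  have e2: "- eta = (- th0) - r * sin (- th0)" by (simp add: eta_def)
  consider "0 < sin eta" | "sin eta < 0" | "sin eta = 0" by linarith
  then have "\<exists>x>0. \<exists>t. t - r * exp (-x) * sin t = eta \<and> x + r * exp (-x) * cos t = r * cos th0 + a"
  proof cases
    case 1 then show ?thesis using core_pos[OF r a eta_def] by simp
  next
    case 2
    have "0 < sin (- eta)" using 2 by simp
    from core_pos[OF r a e2 this] show ?thesis by (intro neg) simp
  next
    case 3
    show ?thesis
    proof (cases "eta \<le> th0")
      case True then show ?thesis using core_zero[OF r a eta_def 3] by simp
    next
      case False
      have "sin (- eta) = 0" "- eta \<le> - th0" using 3 False by auto
      from core_zero[OF r a e2 this] show ?thesis by (intro neg) simp
    qed
  qed
  then show ?thesis unfolding eta_def .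
qed



lemma complex_main:
  fixes a :: real and b :: complex
  assumes a: "0 < a"
  shows "\<exists>u. 0 < Re u \<and> u = of_real a + b * (1 - exp (-u))"
proof (cases "b = 0")
  case True then show ?thesis using a by (intro exI[of _ "of_real a"]) auto
next
  case False
  define r where "r = cmod b"
  define phi where "phi = Arg b"
  have r: "0 < r" using False r_def by simp
  have Reb: "Re b = r * cos phi" using cos_Arg[OF False] False by (simp add: r_def phi_def)
  have Imb: "Im b = r * sin phi" using sin_Arg[OF False] False by (simp add: r_def phi_def)
  obtain x th where x: "0 < x" "th - r * exp (-x) * sin th = (-phi) - r * sin (-phi)"
      "x + r * exp (-x) * cos th = r * cos (-phi) + a"
    using real_main[OF r a, of "-phi"] by blast
  define u where "u = Complex x (th + phi)"
  have ReE: "Re (exp (-u)) = exp (-x) * cos (th + phi)" by (simp add: u_def Re_exp cos_diff cos_add)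
  have ImE: "Im (exp (-u)) = - (exp (-x) * sin (th + phi))" by (simp add: u_def Im_exp sin_diff sin_add algebra_simps)
  show ?thesis
  proof (intro exI conjI)
    show "0 < Re u" using x u_def by simp
    show "u = of_real a + b * (1 - exp (-u))"
    proof (rule complex_eqI)
      have "Re (of_real a + b * (1 - exp (-u))) = a + r * cos phi - r * exp (-x) * (cos phi * cos (th + phi) + sin phi * sin (th + phi))"
        using Reb Imb ReE ImE by (simp add: algebra_simps)
      also have "cos phi * cos (th + phi) + sin phi * sin (th + phi) = cos th"
        using cos_diff[of "th + phi" phi] by (simp add: algebra_simps)
      finally show "Re u = Re (of_real a + b * (1 - exp (-u)))" using x(3) by (simp add: u_def)
    next
      have "Im (of_real a + b * (1 - exp (-u))) = r * sin phi + r * exp (-x) * (cos phi * sin (th + phi) - sin phi * cos (th + phi))"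
        using Reb Imb ReE ImE by (simp add: algebra_simps)
      also have "cos phi * sin (th + phi) - sin phi * cos (th + phi) = sin th"
        using sin_diff[of "th + phi" phi] by (simp add: algebra_simps)
      finally show "Im u = Im (of_real a + b * (1 - exp (-u)))" using x(2) by (simp add: u_def)
    qed
  qed
qed

lemma char_fun_eq:
  "char_fun (rotmat l w) (rotmat al be) T z =
     (z - l - (1 - exp (- z * complex_of_real T)) * al)^2 + (w + (1 - exp (- z * complex_of_real T)) * be)^2"
  unfolding char_fun_def det_2 rotmat_def cmat_def
  by (simp add: matrix_matrix_mult_def mat_def sum_2 power2_eq_square algebra_simps)

theorem corollary6:
  fixes f :: "real^2 \<Rightarrow> real^2" and f' :: "real^2 \<Rightarrow> real^2^2"
    and xs :: "real^2" and lam \<omega> \<alpha> \<beta> :: real and n :: nat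
  assumes C1: "\<And>x. (f has_derivative (\<lambda>h. f' x *v h)) (at x)"
    and C1cont: "continuous_on UNIV f'"
    and equil: "f xs = 0"
    and jac: "f' xs = rotmat lam \<omega>"
    and lampos: "lam > 0" and om: "\<omega> > 0"
    and n: "n > 0"
  shows "\<exists>z. Re z > 0 \<and> char_fun (f' xs) (rotmat \<alpha> \<beta>) (2 * pi * real n / \<omega>) z = 0"
proof -
  define T where "T = 2 * pi * real n / \<omega>"
  have T: "0 < T" using n om by (simp add: T_def)
  have wT: "\<omega> * T = 2 * pi * real n" using om by (simp add: T_def)
  obtain u where u: "0 < Re u"
      "u = of_real (lam * T) + (of_real T * (of_real \<alpha> - \<i> * of_real \<beta>)) * (1 - exp (-u))"
    using complex_main[of "lam * T" "of_real T * (of_real \<alpha> - \<i> * of_real \<beta>)"] lampos T by auto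
  define z where "z = u / of_real T - \<i> * of_real \<omega>"
  have e1: "- z * of_real T = - u + \<i> * of_real (\<omega> * T)"
    using T unfolding z_def by (simp add: field_simps)
  have e2: "(of_real (\<omega> * T) :: complex) = of_int (int n) * (of_real pi * 2)"
    unfolding wT by simp
  have "- z * of_real T = - u + \<i> * (of_int (int n) * (of_real pi * 2))"
    using e1 e2 by simp
  then have ez: "exp (- z * of_real T) = exp (- u)" by (simp only: exp_plus_2pin)
  define c where "c = 1 - exp (- u)"
  have uT: "u / of_real T = of_real lam + (of_real \<alpha> - \<i> * of_real \<beta>) * c"
    using u(2) T unfolding c_def by (simp add: field_simps)
  have key: "z - of_real lam - c * of_real \<alpha> + \<i> * (of_real \<omega> + c * of_real \<beta>) = 0"
    unfolding z_def uT by (simp add: algebra_simps)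
  then have p: "z - of_real lam - c * of_real \<alpha> = - \<i> * (of_real \<omega> + c * of_real \<beta>)"
    by (simp add: algebra_simps add_eq_0_iff)
  have "char_fun (f' xs) (rotmat \<alpha> \<beta>) T z = 0"
    unfolding jac char_fun_eq ez c_def[symmetric] p by (simp add: power2_eq_square algebra_simps)
  moreover have "0 < Re z" using u(1) T by (simp add: z_def)
  ultimately show ?thesis unfolding T_def by blast
qed


end
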